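(* Let $\epsilon\in(0,1-2^{-1/2})$ and $(a,b)\in\mathbf B_\epsilon$. Then with $\eta=3^{3/2}2^{-1}$, $$\operatorname{ess\,sup}_{z\in\mathbb T}\frac{|b(z)|}{|a(z)|}\le 1-\eta\epsilon.$$
   Context: $\mathbb T$ unit circle, $\mathbb D$ open unit disc, $\mathbb D^*=\{\overline z^{-1}:z\in\mathbb D\}\cup\{\infty\}$, $a^*(z)=\overline{a(\overline z^{-1})}$. $H^2(\mathbb D)$: functions in $L^2(\mathbb T)$ with vanishing negative Fourier coefficients; $H^2(\mathbb D^* )$: $f$ with $f^*\in H^2(\mathbb D)$, extended analytically to $\mathbb D^*$ with $f(\infty)=\overline{f^*(0)}$. $\mathbf L$: pairs $(a,b)$ of measurable functions on $\mathbb T$ with $aa^*+bb^*=1$ a.e. on $\mathbb T$, $a\in H^2(\mathbb D^* )$, $a(\infty)>0$. $\mathbf B$: $(a,b)\in\mathbf L$ with $\inf_{z\in\mathbb D^*}|a(z)|^2>\frac12$. For $\epsilon>0$, $\mathbf B_\epsilon$ is the set of $(a,b)\in\mathbf B$ with $\inf_{z\in\mathbb D^*}|a(z)|\ge 2^{-1/2}+\epsilon$. *)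

theory Defs
  imports "HOL-Analysis.Analysis" "HOL-Probability.Essential_Supremum"
begin

definition T_meas :: "complex measure" where
  "T_meas = distr (restrict_space lborel {0..<2*pi}) borel cis"

definition fourier_coeff :: "(complex \<Rightarrow> complex) \<Rightarrow> int \<Rightarrow> complex" where
  "fourier_coeff f n = (integral\<^sup>L T_meas (\<lambda>z. f z * z powi (- n))) / complex_of_real (2*pi)"

definition L2_T :: "(complex \<Rightarrow> complex) \<Rightarrow> bool" where
  "L2_T f \<longleftrightarrow> f \<in> borel_measurable T_meas \<and> integrable T_meas (\<lambda>z. (cmod (f z))^2)"

definition H2_D :: "(complex \<Rightarrow> complex) \<Rightarrow> bool" where
  "H2_D f \<longleftrightarrow> L2_T f \<and> (\<forall>n::int. n < 0 \<longrightarrow> fourier_coeff f n = 0)"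

definition star :: "(complex \<Rightarrow> complex) \<Rightarrow> complex \<Rightarrow> complex" where
  "star f z = cnj (f (1 / cnj z))"

definition H2_Dstar :: "(complex \<Rightarrow> complex) \<Rightarrow> bool" where
  "H2_Dstar f \<longleftrightarrow> H2_D (star f)"

definition H2_D_ext :: "(complex \<Rightarrow> complex) \<Rightarrow> complex \<Rightarrow> complex" where
  "H2_D_ext f w = (\<Sum>n. fourier_coeff f (int n) * w ^ n)"

definition H2_Dstar_ext :: "(complex \<Rightarrow> complex) \<Rightarrow> complex \<Rightarrow> complex" where
  "H2_Dstar_ext f z = cnj (H2_D_ext (star f) (1 / cnj z))"

text \<open>Value at infinity: f(\<infinity>) = conj (f^*(0)).\<close>
definition H2_Dstar_inf :: "(complex \<Rightarrow> complex) \<Rightarrow> complex" where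
  "H2_Dstar_inf f = cnj (H2_D_ext (star f) 0)"

definition inf_abs_Dstar :: "(complex \<Rightarrow> complex) \<Rightarrow> real" where
  "inf_abs_Dstar f = Inf (insert (cmod (H2_Dstar_inf f)) {cmod (H2_Dstar_ext f z) | z. 1 < cmod z})"

definition inf_abs2_Dstar :: "(complex \<Rightarrow> complex) \<Rightarrow> real" where
  "inf_abs2_Dstar f = Inf (insert ((cmod (H2_Dstar_inf f))^2) {(cmod (H2_Dstar_ext f z))^2 | z. 1 < cmod z})"

definition class_L :: "(complex \<Rightarrow> complex) \<Rightarrow> (complex \<Rightarrow> complex) \<Rightarrow> bool" where
  "class_L a b \<longleftrightarrow> a \<in> borel_measurable T_meas \<and> b \<in> borel_measurable T_meas
     \<and> (AE z in T_meas. a z * star a z + b z * star b z = 1)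
     \<and> H2_Dstar a \<and> H2_Dstar_inf a \<in> \<real> \<and> Re (H2_Dstar_inf a) > 0"

definition class_B :: "(complex \<Rightarrow> complex) \<Rightarrow> (complex \<Rightarrow> complex) \<Rightarrow> bool" where
  "class_B a b \<longleftrightarrow> class_L a b \<and> inf_abs2_Dstar a > 1/2"

definition class_B_eps :: "real \<Rightarrow> (complex \<Rightarrow> complex) \<Rightarrow> (complex \<Rightarrow> complex) \<Rightarrow> bool" where
  "class_B_eps \<epsilon> a b \<longleftrightarrow> class_B a b \<and> inf_abs_Dstar a \<ge> 2 powr (-1/2) + \<epsilon>"

end

theory Submission
  imports Defs "HOL-Analysis.Analysis"
begin

lemma poly_key:
  fixes v :: real
  assumes "0 \<le> v"
  shows "27 * v^2 * (1 - v) \<le> 4"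
proof -
  have "4 - 27 * v^2 * (1 - v) = (3 * v - 2)^2 * (3 * v + 1)"
    by (simp add: power2_eq_square algebra_simps)
  also have "\<dots> \<ge> 0" using assms by simp
  finally show ?thesis by simp
qed

lemma deriv_bound:
  fixes u :: real
  assumes "0 < u" "u < 1"
  shows "3 * sqrt 3 / 2 \<le> 1 / (u^2 * sqrt (1 - u^2))"
proof -
  have s: "0 < sqrt (1 - u^2)" using assms by (simp add: power_less_one_iff abs_less_iff)
  have "(u^2 * sqrt (1 - u^2))^2 = (u^2)^2 * (1 - u^2)"
    using assms by (simp add: power_mult_distrib abs_square_le_1)
  also have "\<dots> \<le> 4/27" using poly_key[of "u^2"] by simp
  finally have "(u^2 * sqrt (1 - u^2))^2 \<le> (2 / (3 * sqrt 3))^2"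
    by (simp add: power_divide power_mult_distrib)
  hence "u^2 * sqrt (1 - u^2) \<le> 2 / (3 * sqrt 3)"
    by (rule power2_le_imp_le) simp
  thus ?thesis using s assms
    by (simp add: field_simps)
qed

lemma psi_bound:
  fixes x :: real
  assumes "1 / sqrt 2 \<le> x" "x < 1"
  shows "sqrt (1 - x^2) / x \<le> 1 - (3 * sqrt 3 / 2) * (x - 1 / sqrt 2)"
proof (cases "x = 1 / sqrt 2")
  case True
  have "sqrt (1 - (1 / sqrt 2)^2) = 1 / sqrt 2"
    by (simp add: power_divide real_sqrt_divide) 
  then show ?thesis using True by simp
next
  case False
  define x0 :: real where "x0 = 1 / sqrt 2"
  have x0pos: "0 < x0" unfolding x0_def by simp
  have lt: "x0 < x" using assms False unfolding x0_def by simp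
  define f where "f = (\<lambda>u::real. sqrt (1 - u^2) / u)"
  define f' where "f' = (\<lambda>u::real. - 1 / (u^2 * sqrt (1 - u^2)))"
  have D: "DERIV f u :> f' u" if "x0 \<le> u" "u \<le> x" for u
  proof -
    have u: "0 < u" "u < 1" using that x0pos assms by auto
    have p: "0 < 1 - u^2" using u by (simp add: abs_square_less_1)
    have s: "0 < sqrt (1 - u^2)" using p by simp
    have "DERIV f u :> ((inverse (sqrt (1 - u^2)) / 2) * (- (2 * u)) * u - sqrt (1 - u^2)) / (u * u)"
      unfolding f_def using u p
      by (auto intro!: derivative_eq_intros simp: power2_eq_square)
    moreover have "((inverse (sqrt (1 - u^2)) / 2) * (- (2 * u)) * u - sqrt (1 - u^2)) / (u * u) = f' u"
      unfolding f'_def using s u p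
      by (simp add: field_simps power2_eq_square)
    ultimately show ?thesis by simp
  qed
  obtain z where z: "x0 < z" "z < x" "f x - f x0 = (x - x0) * f' z"
    using MVT2[OF lt, of f f'] D by auto
  have z01: "0 < z" "z < 1" using z x0pos assms by auto
  have "f' z \<le> - (3 * sqrt 3 / 2)"
    using deriv_bound[OF z01] unfolding f'_def by simp
  hence "f x - f x0 \<le> (x - x0) * (- (3 * sqrt 3 / 2))"
    using z lt mult_left_mono[of "f' z" "- (3 * sqrt 3 / 2)" "x - x0"] by simp
  moreover have "f x0 = 1"
    unfolding f_def x0_def by (simp add: power_divide real_sqrt_divide)
  ultimately show ?thesis unfolding f_def x0_def by (simp add: algebra_simps)
qed

lemma powr_facts: "2 powr (-1/2) = 1 / sqrt (2::real)" "3 powr (3/2) = 3 * sqrt (3::real)"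
proof -
  show "2 powr (-1/2) = 1 / sqrt (2::real)"
  proof -
    have "(2::real) powr (-1/2) = inverse (2 powr (1/2))" by (subst powr_minus[symmetric]) simp
    also have "\<dots> = 1 / sqrt 2" by (simp add: powr_half_sqrt inverse_eq_divide)
    finally show ?thesis .
  qed
  have "3 powr (3/2) = (3::real) powr (1 + 1/2)" by simp
  also have "\<dots> = 3 powr 1 * 3 powr (1/2)" by (rule powr_add)
  also have "\<dots> = 3 * sqrt 3" by (simp add: powr_half_sqrt)
  finally show "3 powr (3/2) = 3 * sqrt (3::real)" .
qed

lemma eta_small: "(3 * sqrt 3 / 2) * (1 - 1 / sqrt 2) \<le> (1::real)"
proof -
  have a: "sqrt 3 \<le> (1.74::real)" by (rule real_le_lsqrt) (auto simp: power2_eq_square)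
  have b: "sqrt 2 \<le> (1.42::real)" by (rule real_le_lsqrt) (auto simp: power2_eq_square)
  have c: "1 - 1 / sqrt 2 \<le> 1 - 1 / (1.42::real)" using b by (simp add: field_simps)
  have d: "0 \<le> 1 - 1 / sqrt (2::real)" by simp
  have e: "(3 * sqrt 3 / 2) \<le> (3 * 1.74 / (2::real))" using a by simp
  have "(3 * sqrt 3 / 2) * (1 - 1 / sqrt 2) \<le> (3 * 1.74 / 2) * (1 - 1 / (1.42::real))"
    by (rule mult_mono[OF e c]) (simp_all add: d)
  also have "\<dots> \<le> 1" by simp
  finally show ?thesis .
qed

lemma ratio_bound:
  fixes \<epsilon> x y :: real
  assumes "0 < \<epsilon>" "2 powr (-1/2) + \<epsilon> \<le> x" "0 \<le> y" "x^2 + y^2 = 1" "\<epsilon> < 1 - 2 powr (-1/2)"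
  shows "y / x \<le> 1 - (3 powr (3/2) / 2) * \<epsilon>"
proof -
  have x0: "1 / sqrt 2 + \<epsilon> \<le> x" using assms(2) powr_facts by simp
  have eps: "\<epsilon> < 1 - 1 / sqrt 2" using assms(5) powr_facts by simp
  have "0 < 1 / sqrt (2::real)" by simp
  hence xpos: "0 < x" using x0 assms(1) by linarith
  have "x^2 \<le> 1" using assms(4) zero_le_power2[of y] by linarith
  hence x1: "x \<le> 1" using xpos by (simp add: abs_square_le_1)
  have y: "y = sqrt (1 - x^2)" using assms(3,4) real_sqrt_unique[of y "1 - x^2"] by simp
  show ?thesis
  proof (cases "x = 1")
    case True
    hence "y = 0" using y by simp
    moreover have "(3 * sqrt 3 / 2) * \<epsilon> \<le> (3 * sqrt 3 / 2) * (1 - 1 / sqrt 2)"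
      using eps by (intro mult_left_mono) auto
    hence "(3 * sqrt 3 / 2) * \<epsilon> \<le> 1" using eta_small by linarith
    ultimately show ?thesis using powr_facts by simp
  next
    case False
    hence "x < 1" using x1 by simp
    have xx: "1 / sqrt 2 \<le> x" using x0 assms(1) by linarith
    have "y / x \<le> 1 - (3 * sqrt 3 / 2) * (x - 1 / sqrt 2)"
      using psi_bound[OF xx \<open>x < 1\<close>] y by simp
    also have "\<dots> \<le> 1 - (3 * sqrt 3 / 2) * \<epsilon>"
      using x0 by (simp add: mult_left_mono)
    finally show ?thesis using powr_facts by simp
  qed
qed

definition PK :: "real \<Rightarrow> real \<Rightarrow> real" where
  "PK r \<theta> = (1 - r^2) / (cmod (1 - complex_of_real r * cis \<theta>))^2"

definition uterm :: "real \<Rightarrow> real \<Rightarrow> nat \<Rightarrow> complex" where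
  "uterm r \<theta> n = complex_of_real (r^n) * cis (real n * \<theta>) +
     (if n = 0 then 0 else complex_of_real (r^n) * cis (- (real n * \<theta>)))"

lemma borel_measurable_cis[measurable (raw)]:
  "f \<in> borel_measurable M \<Longrightarrow> (\<lambda>x. cis (f x)) \<in> borel_measurable M"
proof -
  have "cis \<in> borel_measurable borel"
    by (rule borel_measurable_continuous_onI) (intro continuous_intros)
  thus "f \<in> borel_measurable M \<Longrightarrow> (\<lambda>x. cis (f x)) \<in> borel_measurable M"
    using measurable_compose by blast
qed

lemma denom_eq: "(cmod (1 - complex_of_real r * cis \<theta>))^2 = 1 - 2 * r * cos \<theta> + r^2"
proof -
  have "(cmod (1 - complex_of_real r * cis \<theta>))^2 = (1 - r * cos \<theta>)^2 + (r * sin \<theta>)^2"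
    by (simp add: cmod_power2 cis.sel)
  also have "\<dots> = 1 - 2 * r * cos \<theta> + r^2"
    using sin_cos_squared_add[of \<theta>] by algebra
  finally show ?thesis .
qed

lemma denom_pos:
  assumes "0 \<le> r" "r < 1"
  shows "0 < (cmod (1 - complex_of_real r * cis \<theta>))^2"
proof -
  have "norm (complex_of_real r * cis \<theta>) = r" using assms by (simp add: norm_mult)
  hence "1 - complex_of_real r * cis \<theta> \<noteq> 0" using assms by auto
  thus ?thesis by simp
qed

lemma PK_nonneg: "0 \<le> r \<Longrightarrow> r < 1 \<Longrightarrow> 0 \<le> PK r \<theta>"
  unfolding PK_def using denom_pos[of r \<theta>]
  by (intro divide_nonneg_pos) (auto simp: abs_square_le_1 power_le_one)

lemma PK_cont: "0 \<le> r \<Longrightarrow> r < 1 \<Longrightarrow> continuous_on UNIV (PK r)"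
  unfolding PK_def using denom_pos[of r]
  by (intro continuous_intros) auto

lemma PK_measurable[measurable]: "0 \<le> r \<Longrightarrow> r < 1 \<Longrightarrow> PK r \<in> borel_measurable borel"
  using PK_cont borel_measurable_continuous_onI by blast

lemma PK_bound:
  assumes "0 < r" "r < 1" "cos \<theta> < 1"
  shows "PK r \<theta> \<le> (1 - r^2) / (2 * r * (1 - cos \<theta>))"
proof -
  have "2 * r * (1 - cos \<theta>) \<le> 1 - 2 * r * cos \<theta> + r^2"
  proof -
    have "1 - 2 * r * cos \<theta> + r^2 - 2 * r * (1 - cos \<theta>) = (1 - r)^2"
      by (simp add: power2_eq_square algebra_simps)
    thus ?thesis using zero_le_power2[of "1 - r"] by linarith
  qed
  moreover have "0 < 2 * r * (1 - cos \<theta>)" using assms by simp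
  moreover have "0 \<le> 1 - r^2" using assms by (simp add: abs_square_le_1)
  ultimately show ?thesis unfolding PK_def denom_eq
    by (intro divide_left_mono) auto
qed

lemma uterm_norm: "0 \<le> r \<Longrightarrow> norm (uterm r \<theta> n) \<le> 2 * r^n"
  unfolding uterm_def
  by (rule order_trans[OF norm_triangle_ineq]) (auto simp: norm_mult norm_power)

lemma uterm_sums:
  assumes "0 \<le> r" "r < 1"
  shows "uterm r \<theta> sums complex_of_real (PK r \<theta>)"
proof -
  define z where "z = complex_of_real r * cis \<theta>"
  define w where "w = complex_of_real r * cis (- \<theta>)"
  have nz: "norm z = r" "norm w = r" using assms unfolding z_def w_def by (auto simp: norm_mult)
  have s1: "(\<lambda>n. z^n) sums (1 / (1 - z))" using geometric_sums[of z] nz assms by simp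
  have s2: "(\<lambda>n. w^n) sums (1 / (1 - w))" using geometric_sums[of w] nz assms by simp
  have s3: "(\<lambda>n. w^n - (if n = 0 then 1 else 0)) sums (1 / (1 - w) - 1)"
    using sums_diff[OF s2 sums_single[of 0 "\<lambda>_. 1::complex"]] by simp
  have s4: "(\<lambda>n. z^n + (w^n - (if n = 0 then 1 else 0))) sums (1 / (1 - z) + (1 / (1 - w) - 1))"
    by (rule sums_add[OF s1 s3])
  have eq: "z^n + (w^n - (if n = 0 then 1 else 0)) = uterm r \<theta> n" for n
    unfolding z_def w_def uterm_def
    by (simp add: power_mult_distrib Complex.DeMoivre)
  have d: "1 - z \<noteq> 0" "1 - w \<noteq> 0" using nz assms by auto
  have wc: "w = cnj z" unfolding z_def w_def by (simp add: cis_cnj)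
  have zz: "z * cnj z = complex_of_real (r^2)"
    using complex_norm_square[of z] nz by simp
  have dd: "(1 - z) * (1 - cnj z) = complex_of_real ((cmod (1 - z))^2)"
    using complex_norm_square[of "1 - z"] by simp
  have "1 / (1 - z) + (1 / (1 - w) - 1) = ((1 - cnj z) + (1 - z) - (1 - z) * (1 - cnj z)) / ((1 - z) * (1 - cnj z))"
    using d unfolding wc by (simp add: field_simps)
  also have "(1 - cnj z) + (1 - z) - (1 - z) * (1 - cnj z) = 1 - z * cnj z"
    by (simp add: algebra_simps)
  also have "\<dots> = complex_of_real (1 - r^2)" using zz by simp
  also have "complex_of_real (1 - r^2) / ((1 - z) * (1 - cnj z)) = complex_of_real ((1 - r^2) / (cmod (1 - z))^2)"
    unfolding dd by simp
  also have "\<dots> = complex_of_real (PK r \<theta>)" unfolding PK_def z_def ..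
  finally have "1 / (1 - z) + (1 / (1 - w) - 1) = complex_of_real (PK r \<theta>)" .
  with s4 eq show ?thesis by simp
qed

lemma int_cis:
  fixes k :: int
  assumes "k \<noteq> 0"
  shows "(LINT s:{c..c+2*pi}|lborel. cis (of_int k * (s - t))) = 0"
proof -
  define F where "F = (\<lambda>s. cis (of_int k * (s - t)) / (\<i> * of_int k))"
  have D: "(F has_vector_derivative cis (of_int k * (s - t))) (at s within {c..c+2*pi})" for s
    unfolding F_def has_vector_derivative_def using assms
    by (auto intro!: derivative_eq_intros ext simp: field_simps scaleR_conv_of_real)
  have C: "continuous_on {c..c+2*pi} (\<lambda>s. cis (of_int k * (s - t)))"
    by (intro continuous_intros)
  have "(LINT s:{c..c+2*pi}|lborel. cis (of_int k * (s - t))) = F (c + 2*pi) - F c"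
    unfolding set_lebesgue_integral_def
    by (rule integral_FTC_atLeastAtMost[OF _ D C]) simp
  also have "F (c + 2*pi) = F c"
  proof -
    have "cis (of_int k * (c + 2*pi - t)) = cis (of_int k * (c - t)) * cis (2 * pi * of_int k)"
      by (simp add: cis_mult algebra_simps)
    also have "cis (2 * pi * of_int k) = 1" by (rule cis_multiple_2pi) simp
    finally show ?thesis unfolding F_def by simp
  qed
  finally show ?thesis by simp
qed

lemma uterm_int:
  assumes "0 \<le> r"
  shows "(LINT s:{c..c+2*pi}|lborel. uterm r (s - t) n) = (if n = 0 then complex_of_real (2*pi) else 0)"
proof (cases "n = 0")
  case True
  have "(LINT s:{c..c+2*pi}|lborel. complex_of_real 1) = complex_of_real (LINT s:{c..c+2*pi}|lborel. 1)"
    by (rule set_integral_complex_of_real)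
  thus ?thesis unfolding uterm_def using True by (simp add: set_lebesgue_integral_def)
next
  case False
  have i1: "set_integrable lborel {c..c+2*pi} (\<lambda>s. cis (of_int (int n) * (s - t)))"
    by (rule borel_integrable_atLeastAtMost') (intro continuous_intros)
  have i2: "set_integrable lborel {c..c+2*pi} (\<lambda>s. cis (of_int (- int n) * (s - t)))"
    by (rule borel_integrable_atLeastAtMost') (intro continuous_intros)
  have e: "uterm r (s - t) n = complex_of_real (r^n) * cis (of_int (int n) * (s - t)) + complex_of_real (r^n) * cis (of_int (- int n) * (s - t))" for s
    unfolding uterm_def using False by simp
  have "(LINT s:{c..c+2*pi}|lborel. uterm r (s - t) n) =
        (LINT s:{c..c+2*pi}|lborel. complex_of_real (r^n) * cis (of_int (int n) * (s - t)) + complex_of_real (r^n) * cis (of_int (- int n) * (s - t)))"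
    unfolding e ..
  also have "\<dots> = complex_of_real (r^n) * (LINT s:{c..c+2*pi}|lborel. cis (of_int (int n) * (s - t))) + complex_of_real (r^n) * (LINT s:{c..c+2*pi}|lborel. cis (of_int (- int n) * (s - t)))"
    using i1 i2 by (simp add: set_integral_add set_integral_mult_right set_integrable_mult_right)
  also have "\<dots> = 0"
  proof -
    have "(LINT s:{c..c+2*pi}|lborel. cis (of_int (int n) * (s - t))) = 0"
      by (rule int_cis) (use False in simp)
    moreover have "(LINT s:{c..c+2*pi}|lborel. cis (of_int (- int n) * (s - t))) = 0"
      by (rule int_cis) (use False in simp)
    ultimately show ?thesis by simp
  qed
  finally show ?thesis using False by simp
qed

lemma full_period:
  assumes "0 \<le> r" "r < 1"
  shows "(LINT s:{c..c+2*pi}|lborel. PK r (s - t)) = 2 * pi"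
proof -
  define I where "I = {c..c+2*pi}"
  define f where "f = (\<lambda>n s. indicator I s *\<^sub>R uterm r (s - t) n)"
  have fm[measurable]: "f n \<in> borel_measurable lborel" for n
    unfolding f_def uterm_def I_def by measurable
  have fi: "integrable lborel (f n)" for n
  proof -
    have "continuous_on UNIV (\<lambda>s. uterm r (s - t) n)"
      unfolding uterm_def by (cases "n = 0") (auto intro!: continuous_intros)
    hence "set_integrable lborel I (\<lambda>s. uterm r (s - t) n)"
      unfolding I_def by (intro borel_integrable_atLeastAtMost') (rule continuous_on_subset, auto)
    thus ?thesis unfolding f_def set_integrable_def .
  qed
  have sm: "summable (\<lambda>i. norm (f i x))" for x
  proof (rule summable_comparison_test)
    show "\<exists>N. \<forall>n\<ge>N. norm (norm (f n x)) \<le> 2 * r^n"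
      unfolding f_def using uterm_norm[OF assms(1)] assms(1) by (auto simp: indicator_def)
    show "summable (\<lambda>n. 2 * r^n)" using assms by (intro summable_mult summable_geometric) auto
  qed
  have bnd: "(\<integral>x. norm (f i x) \<partial>lborel) \<le> 2 * pi * (2 * r^i)" for i
  proof -
    have "(\<integral>x. norm (f i x) \<partial>lborel) \<le> (\<integral>x. indicator I x * (2 * r^i) \<partial>lborel)"
      apply (rule integral_mono)
      using fi apply simp
      subgoal unfolding I_def by (intro integrable_mult_left) simp
      unfolding f_def using uterm_norm[OF assms(1)] by (auto simp: indicator_def)
    also have "\<dots> = 2 * pi * (2 * r^i)" unfolding I_def by simp
    finally show ?thesis .
  qed
  have si: "summable (\<lambda>i. \<integral>x. norm (f i x) \<partial>lborel)"
  proof (rule summable_comparison_test)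
    show "\<exists>N. \<forall>n\<ge>N. norm (\<integral>x. norm (f n x) \<partial>lborel) \<le> 2 * pi * (2 * r^n)"
      using bnd by (auto simp: integral_nonneg_AE)
    show "summable (\<lambda>n. 2 * pi * (2 * r^n))" using assms by (intro summable_mult summable_geometric) auto
  qed
  have ps: "(\<lambda>n. f n s) sums (indicator I s *\<^sub>R complex_of_real (PK r (s - t)))" for s
    unfolding f_def by (intro sums_scaleR_right uterm_sums assms)
  have "complex_of_real (LINT s:I|lborel. PK r (s - t)) = (LINT s:I|lborel. complex_of_real (PK r (s - t)))"
    by (simp add: set_integral_complex_of_real)
  also have "\<dots> = (\<integral>s. (\<Sum>n. f n s) \<partial>lborel)"
    unfolding set_lebesgue_integral_def using ps by (metis sums_unique)
  also have "\<dots> = (\<Sum>n. integral\<^sup>L lborel (f n))"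
    by (rule integral_suminf[OF fi]) (use sm si in auto)
  also have "\<dots> = (\<Sum>n. if n = 0 then complex_of_real (2*pi) else 0)"
    using uterm_int[OF assms(1)] unfolding f_def I_def set_lebesgue_integral_def by simp
  also have "\<dots> = complex_of_real (2*pi)"
    using sums_single[of 0 "\<lambda>_. complex_of_real (2*pi)"] by (simp add: sums_iff)
  finally have "complex_of_real (LINT s:I|lborel. PK r (s - t)) = complex_of_real (2*pi)" .
  thus ?thesis unfolding I_def of_real_eq_iff .
qed

lemma cos_lt_1:
  assumes "0 < \<theta> \<and> \<theta> < 2*pi \<or> -2*pi < \<theta> \<and> \<theta> < 0"
  shows "cos \<theta> < 1"
proof (rule ccontr)
  assume "\<not> cos \<theta> < 1"
  hence "cos \<theta> = 1" using cos_le_one[of \<theta>] by linarith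
  then obtain n :: int where n: "\<theta> = of_int n * 2 * pi" using cos_one_2pi_int by blast
  from assms consider "0 < of_int n * 2 * pi \<and> of_int n * 2 * pi < 2 * pi" | "-2*pi < of_int n * 2 * pi \<and> of_int n * 2 * pi < 0"
    using n by auto
  thus False
  proof cases
    case 1
    hence "(0::real) < of_int n" "of_int n < (1::real)" using pi_gt_zero
      by (auto simp: zero_less_mult_iff mult_less_cancel_right2)
    hence "0 < n" "n < 1" by simp_all
    thus False by simp
  next
    case 2
    hence "(-1) * (2*pi) < of_int n * (2*pi)" "of_int n * (2*pi) < 0 * (2*pi)"
      by (simp_all add: mult.assoc)
    hence "(-1::real) < of_int n" "of_int n < (0::real)" using pi_gt_zero
      by (simp_all only: mult_less_cancel_right)
    hence "-1 < n" "n < 0" by simp_all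
    thus False by simp
  qed
qed

lemma conc:
  fixes \<alpha> \<beta> :: real
  assumes "\<alpha> \<le> \<beta>" "(0 < \<alpha> \<and> \<beta> < 2*pi) \<or> (-2*pi < \<alpha> \<and> \<beta> < 0)"
  shows "\<exists>C>0. \<forall>r \<theta>. 1/2 \<le> r \<and> r < 1 \<and> \<theta> \<in> {\<alpha>..\<beta>} \<longrightarrow> PK r \<theta> \<le> C * (1 - r)"
proof -
  have cc: "continuous_on {\<alpha>..\<beta>} (\<lambda>x. cos x)" by (intro continuous_intros)
  obtain \<theta>0 where t0: "\<theta>0 \<in> {\<alpha>..\<beta>}" "\<And>\<theta>. \<theta> \<in> {\<alpha>..\<beta>} \<Longrightarrow> cos \<theta> \<le> cos \<theta>0"
    using continuous_attains_sup[OF compact_Icc _ cc] assms(1) by auto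
  have lt: "cos \<theta> < 1" if "\<theta> \<in> {\<alpha>..\<beta>}" for \<theta>
    by (rule cos_lt_1) (use that assms(2) in auto)
  define c where "c = 1 - cos \<theta>0"
  have c: "0 < c" using lt[OF t0(1)] unfolding c_def by simp
  show ?thesis
  proof (intro exI[of _ "2 / c"] conjI allI impI)
    show "0 < 2 / c" using c by simp
    fix r \<theta> :: real assume rr: "1/2 \<le> r \<and> r < 1 \<and> \<theta> \<in> {\<alpha>..\<beta>}"
    hence r: "1/2 \<le> r" "r < 1" and th: "\<theta> \<in> {\<alpha>..\<beta>}" by auto
    have "PK r \<theta> \<le> (1 - r^2) / (2 * r * (1 - cos \<theta>))"
      by (rule PK_bound) (use r lt[OF th] in auto)
    also have "\<dots> \<le> (2 * (1 - r)) / (1 * c)"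
    proof (rule frac_le)
      show "0 \<le> 2 * (1 - r)" using r by simp
      show "1 - r^2 \<le> 2 * (1 - r)"
      proof -
        have "1 - r^2 = (1 - r) * (1 + r)" by (simp add: power2_eq_square algebra_simps)
        also have "\<dots> \<le> (1 - r) * 2" using r by (intro mult_left_mono) auto
        finally show ?thesis by simp
      qed
      show "0 < 1 * c" using c by simp
      show "1 * c \<le> 2 * r * (1 - cos \<theta>)"
        using t0(2)[OF th] r c unfolding c_def
        by (intro mult_mono) auto
    qed
    also have "\<dots> = 2 / c * (1 - r)" by simp
    finally show "PK r \<theta> \<le> 2 / c * (1 - r)" .
  qed
qed

lemma PK_shift_integrable:
  assumes "0 \<le> r" "r < 1"
  shows "set_integrable lborel {a..b} (\<lambda>s. PK r (s - t))"
  by (rule borel_integrable_atLeastAtMost', rule continuous_on_compose2[OF PK_cont[OF assms]])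
     (auto intro!: continuous_intros)

definition rk :: "nat \<Rightarrow> real" where "rk k = 1 - 1 / (real k + 2)"

lemma rk: "1/2 \<le> rk k" "rk k < 1" "0 \<le> rk k" "0 < rk k"
  unfolding rk_def by (auto simp: field_simps)

lemma rk_lim: "(\<lambda>k. 1 - rk k) \<longlonglongrightarrow> 0"
proof -
  have "(\<lambda>k. 1 / (real k + 2)) \<longlonglongrightarrow> 0"
    using LIMSEQ_ignore_initial_segment[OF lim_inverse_n', of 2] by (simp add: add.commute)
  thus ?thesis unfolding rk_def by simp
qed

lemma int_small:
  assumes "a \<le> b" "(0 < a - t \<and> b - t < 2*pi) \<or> (-2*pi < a - t \<and> b - t < 0)"
  shows "(\<lambda>k. LINT s:{a..b}|lborel. PK (rk k) (s - t)) \<longlonglongrightarrow> 0"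
proof -
  obtain C where C: "C > 0" "\<And>r \<theta>. 1/2 \<le> r \<Longrightarrow> r < 1 \<Longrightarrow> \<theta> \<in> {a-t..b-t} \<Longrightarrow> PK r \<theta> \<le> C * (1 - r)"
    using conc[of "a - t" "b - t"] assms by force
  have up: "(LINT s:{a..b}|lborel. PK (rk k) (s - t)) \<le> (b - a) * C * (1 - rk k)" for k
  proof -
    have "(LINT s:{a..b}|lborel. PK (rk k) (s - t)) \<le> (LINT s:{a..b}|lborel. C * (1 - rk k))"
      by (rule set_integral_mono[OF PK_shift_integrable borel_integrable_atLeastAtMost'])
         (use rk[of k] C in auto)
    also have "\<dots> = (b - a) * C * (1 - rk k)"
      using assms(1) by (simp add: set_lebesgue_integral_def)
    finally show ?thesis .
  qed
  have lo: "0 \<le> (LINT s:{a..b}|lborel. PK (rk k) (s - t))" for k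
    unfolding set_lebesgue_integral_def
    by (intro Bochner_Integration.integral_nonneg_AE AE_I2) (use PK_nonneg rk in \<open>auto simp: indicator_def\<close>)
  have "(\<lambda>k. (b - a) * C * (1 - rk k)) \<longlonglongrightarrow> (b - a) * C * 0"
    by (intro tendsto_mult tendsto_const rk_lim)
  hence "(\<lambda>k. (b - a) * C * (1 - rk k)) \<longlonglongrightarrow> 0" by simp
  moreover have e1: "\<forall>\<^sub>F k in sequentially. 0 \<le> (LINT s:{a..b}|lborel. PK (rk k) (s - t))"
    using lo by simp
  moreover have e2: "\<forall>\<^sub>F k in sequentially. (LINT s:{a..b}|lborel. PK (rk k) (s - t)) \<le> (b - a) * C * (1 - rk k)"
    using up by simp
  ultimately show ?thesis using real_tendsto_sandwich[OF e1 e2 tendsto_const] by blast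
qed

definition Kf :: "real \<Rightarrow> real \<Rightarrow> real \<Rightarrow> real \<Rightarrow> real" where
  "Kf x \<delta> r t = (LINT s:{x..x+\<delta>}|lborel. PK r (s - t)) / (2*pi)"

lemma Kf_nonneg: "0 \<le> r \<Longrightarrow> r < 1 \<Longrightarrow> 0 \<le> Kf x \<delta> r t"
  unfolding Kf_def set_lebesgue_integral_def
  by (intro divide_nonneg_pos Bochner_Integration.integral_nonneg_AE AE_I2)
     (use PK_nonneg in \<open>auto simp: indicator_def\<close>)

lemma set_int_sub_le:
  assumes "0 \<le> r" "r < 1" "A \<subseteq> B" "set_integrable lborel A (\<lambda>s. PK r (s - t))" "set_integrable lborel B (\<lambda>s. PK r (s - t))"
  shows "(LINT s:A|lborel. PK r (s - t)) \<le> (LINT s:B|lborel. PK r (s - t))"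
  using assms unfolding set_lebesgue_integral_def set_integrable_def
  by (intro integral_mono) (use PK_nonneg in \<open>auto simp: indicator_def\<close>)

lemma Kf_le1:
  assumes "0 \<le> r" "r < 1" "0 \<le> \<delta>" "\<delta> \<le> 2*pi"
  shows "Kf x \<delta> r t \<le> 1"
proof -
  have "(LINT s:{x..x+\<delta>}|lborel. PK r (s - t)) \<le> (LINT s:{x..x+2*pi}|lborel. PK r (s - t))"
    by (rule set_int_sub_le[OF assms(1,2) _ PK_shift_integrable[OF assms(1,2)] PK_shift_integrable[OF assms(1,2)]])
       (use assms in auto)
  also have "\<dots> = 2 * pi" by (rule full_period[OF assms(1,2)])
  finally show ?thesis unfolding Kf_def by simp
qed

lemma Kf_in:
  assumes "0 < \<delta>" "\<delta> < 2*pi" "x < t" "t < x + \<delta>"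
  shows "(\<lambda>k. Kf x \<delta> (rk k) t) \<longlonglongrightarrow> 1"
proof -
  define L where "L = (\<lambda>k. LINT s:{x+\<delta>..x+2*pi}|lborel. PK (rk k) (s - t))"
  have L: "L \<longlonglongrightarrow> 0" unfolding L_def
    by (rule int_small) (use assms in auto)
  have lo: "1 - L k / (2*pi) \<le> Kf x \<delta> (rk k) t" for k
  proof -
    have r: "0 \<le> rk k" "rk k < 1" using rk by auto
    have i1: "set_integrable lborel {x..x+\<delta>} (\<lambda>s. PK (rk k) (s - t))" by (rule PK_shift_integrable[OF r])
    have i2: "set_integrable lborel {x+\<delta>..x+2*pi} (\<lambda>s. PK (rk k) (s - t))" by (rule PK_shift_integrable[OF r])
    have i3: "set_integrable lborel {x..x+2*pi} (\<lambda>s. PK (rk k) (s - t))" by (rule PK_shift_integrable[OF r])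
    have "2 * pi = (LINT s:{x..x+2*pi}|lborel. PK (rk k) (s - t))" by (rule full_period[OF r, symmetric])
    also have "\<dots> \<le> (\<integral>s. indicator {x..x+\<delta>} s *\<^sub>R PK (rk k) (s - t) + indicator {x+\<delta>..x+2*pi} s *\<^sub>R PK (rk k) (s - t) \<partial>lborel)"
      unfolding set_lebesgue_integral_def
      using i1 i2 i3 unfolding set_integrable_def
      by (intro integral_mono) (use PK_nonneg[OF r] in \<open>auto simp: indicator_def\<close>)
    also have "\<dots> = (LINT s:{x..x+\<delta>}|lborel. PK (rk k) (s - t)) + L k"
      unfolding L_def set_lebesgue_integral_def
      using i1 i2 unfolding set_integrable_def by (rule Bochner_Integration.integral_add)
    finally have "2 * pi - L k \<le> (LINT s:{x..x+\<delta>}|lborel. PK (rk k) (s - t))" by simp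
    hence "(2 * pi - L k) / (2*pi) \<le> (LINT s:{x..x+\<delta>}|lborel. PK (rk k) (s - t)) / (2*pi)"
      by (intro divide_right_mono) auto
    moreover have "(2 * pi - L k) / (2*pi) = 1 - L k / (2*pi)" by (simp add: field_simps)
    ultimately show ?thesis unfolding Kf_def by simp
  qed
  have up: "Kf x \<delta> (rk k) t \<le> 1" for k
    by (rule Kf_le1) (use rk assms in auto)
  have "(\<lambda>k. 1 - L k / (2*pi)) \<longlonglongrightarrow> 1 - 0 / (2*pi)"
    by (intro tendsto_intros L) simp
  hence l1: "(\<lambda>k. 1 - L k / (2*pi)) \<longlonglongrightarrow> 1" by simp
  have e1: "\<forall>\<^sub>F k in sequentially. 1 - L k / (2*pi) \<le> Kf x \<delta> (rk k) t" using lo by simp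
  have e2: "\<forall>\<^sub>F k in sequentially. Kf x \<delta> (rk k) t \<le> 1" using up by simp
  show ?thesis using real_tendsto_sandwich[OF e1 e2 l1 tendsto_const] .
qed

lemma Kf_out:
  assumes "0 < x" "0 < \<delta>" "x + \<delta> < 2*pi" "0 \<le> t" "t < 2*pi" "t < x \<or> x + \<delta> < t"
  shows "(\<lambda>k. Kf x \<delta> (rk k) t) \<longlonglongrightarrow> 0"
proof -
  have "(\<lambda>k. LINT s:{x..x+\<delta>}|lborel. PK (rk k) (s - t)) \<longlonglongrightarrow> 0"
    by (rule int_small) (use assms in auto)
  hence "(\<lambda>k. (LINT s:{x..x+\<delta>}|lborel. PK (rk k) (s - t)) / (2*pi)) \<longlonglongrightarrow> 0 / (2*pi)"
    by (intro tendsto_intros) auto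
  thus ?thesis unfolding Kf_def by simp
qed

lemma PK_le:
  assumes "0 \<le> r" "r < 1"
  shows "PK r \<theta> \<le> (1 + r) / (1 - r)"
proof -
  have "(1 - r)^2 \<le> 1 - 2 * r * cos \<theta> + r^2"
  proof -
    have "r * cos \<theta> \<le> r" using assms cos_le_one[of \<theta>] by (simp add: mult_left_le)
    thus ?thesis by (simp add: power2_eq_square algebra_simps)
  qed
  moreover have "0 < (1 - r)^2" using assms by simp
  moreover have "0 < 1 - 2 * r * cos \<theta> + r^2" using calculation by linarith
  ultimately have "PK r \<theta> \<le> (1 - r^2) / (1 - r)^2"
    unfolding PK_def denom_eq using assms
    by (intro divide_left_mono mult_pos_pos) (auto simp: abs_square_le_1)
  also have "\<dots> = ((1 + r) * (1 - r)) / ((1 - r) * (1 - r))" by (simp add: power2_eq_square algebra_simps)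
  also have "\<dots> = (1 + r) / (1 - r)" using assms by simp
  finally show ?thesis .
qed

lemma int_ind0: "integrable lborel (indicator {a..b::real} :: real \<Rightarrow> real)"
  by (rule integrable_real_indicator) (auto simp: emeasure_lborel_Icc_eq)
lemma int_ind: "integrable lborel (\<lambda>s. indicator {a..b::real} s * (c::real))"
  using int_ind0[of a b] by simp

lemma step_A:
  fixes h :: "real \<Rightarrow> complex"
  assumes hm[measurable]: "h \<in> borel_measurable lborel"
    and hi: "set_integrable lborel {0..<2*pi} h"
    and pois: "\<And>s. m \<le> (LINT t:{0..<2*pi}|lborel. norm (h t) * PK r (s - t)) / (2*pi)"
    and r: "0 \<le> r" "r < 1"
    and x: "0 < \<delta>"
  shows "m * \<delta> \<le> (\<integral>t. (indicator {0..<2*pi} t * norm (h t)) * Kf x \<delta> r t \<partial>lborel)"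
proof -
  define S where "S = {0..<2*pi::real}"
  define I where "I = {x..x+\<delta>}"
  define H where "H = (\<lambda>t. indicator S t * norm (h t))"
  define B where "B = (1 + r) / (1 - r)"
  have [measurable]: "PK r \<in> borel_measurable borel" using PK_measurable r by blast
  have Sm[measurable]: "S \<in> sets borel" "I \<in> sets borel" unfolding S_def I_def by auto
  have Hm[measurable]: "H \<in> borel_measurable lborel" unfolding H_def by measurable
  have Hi: "integrable lborel H"
    using integrable_norm[OF hi[unfolded set_integrable_def]] unfolding H_def S_def by (simp add: abs_mult)
  have Hnn: "0 \<le> H t" for t unfolding H_def by simp
  have PKnn: "0 \<le> PK r \<theta>" for \<theta> using PK_nonneg r by blast
  have PKb: "PK r \<theta> \<le> B" for \<theta> unfolding B_def using PK_le r by blast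
  have Bnn: "0 \<le> B" using PKb[of 0] PKnn[of 0] by linarith
  have HPB: "H t * PK r \<theta> \<le> B * H t" for t \<theta> using mult_left_mono[OF PKb Hnn] by (simp add: mult.commute)
  define G where "G = (\<lambda>(s, t). indicator I s * (H t * PK r (s - t)))"
  have Gm[measurable]: "G \<in> borel_measurable (lborel \<Otimes>\<^sub>M lborel)" unfolding G_def by measurable
  have Gnn: "0 \<le> G p" for p unfolding G_def using Hnn PKnn by (auto split: prod.splits)
  have Hk: "integrable lborel (\<lambda>t. H t * PK r (s - t))" for s
    by (rule Bochner_Integration.integrable_bound[OF integrable_mult_right[OF Hi, of B]])
       (use Hnn PKnn HPB Bnn in \<open>auto simp: abs_mult\<close>)
  have Gint: "integrable (lborel \<Otimes>\<^sub>M lborel) G"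
  proof (rule lborel_pair.Fubini_integrable[OF Gm])
    have eq: "(\<lambda>s. \<integral>t. norm (G (s, t)) \<partial>lborel) = (\<lambda>s. indicator I s * (\<integral>t. H t * PK r (s - t) \<partial>lborel))"
      unfolding G_def using Hnn PKnn by (auto simp: abs_mult)
    have bd: "norm (indicator I s * (\<integral>t. H t * PK r (s - t) \<partial>lborel)) \<le> indicator I s * (B * integral\<^sup>L lborel H)" for s
    proof -
      have "(\<integral>t. H t * PK r (s - t) \<partial>lborel) \<le> (\<integral>t. B * H t \<partial>lborel)"
        by (rule integral_mono[OF Hk integrable_mult_right[OF Hi]]) (use HPB in auto)
      moreover have "0 \<le> (\<integral>t. H t * PK r (s - t) \<partial>lborel)"
        by (intro Bochner_Integration.integral_nonneg_AE AE_I2) (use Hnn PKnn in auto)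
      ultimately show ?thesis by (auto simp: indicator_def)
    qed
    show "integrable lborel (\<lambda>s. \<integral>t. norm (G (s, t)) \<partial>lborel)"
      unfolding eq
      by (rule Bochner_Integration.integrable_bound[of _ "\<lambda>s. indicator I s * (B * integral\<^sup>L lborel H)"])
         (use bd Bnn integral_nonneg_AE[of H] Hnn int_ind0[of x "x+\<delta>"] in \<open>auto simp: I_def abs_mult\<close>)
    show "AE s in lborel. integrable lborel (\<lambda>t. G (s, t))"
      unfolding G_def using Hk by auto
  qed
  have F: "(\<integral>t. (\<integral>s. G (s, t) \<partial>lborel) \<partial>lborel) = (\<integral>s. (\<integral>t. G (s, t) \<partial>lborel) \<partial>lborel)"
    using lborel_pair.Fubini_integral[of "\<lambda>s t. G (s, t)"] Gint by simp
  have rhs: "(\<integral>s. G (s, t) \<partial>lborel) = H t * (2 * pi) * Kf x \<delta> r t" for t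
    unfolding G_def Kf_def I_def set_lebesgue_integral_def by (simp add: mult.commute mult.left_commute)
  have lhs: "(\<integral>s. (\<integral>t. G (s, t) \<partial>lborel) \<partial>lborel) \<ge> (\<integral>s. indicator I s * (2 * pi * m) \<partial>lborel)"
  proof (rule integral_mono)
    show "integrable lborel (\<lambda>s. \<integral>t. G (s, t) \<partial>lborel)"
      using lborel_pair.integrable_fst'[OF Gint] by simp
    show "integrable lborel (\<lambda>s. indicator I s * (2 * pi * m))" unfolding I_def by (rule int_ind)
    fix s
    have "2 * pi * m \<le> (\<integral>t. H t * PK r (s - t) \<partial>lborel)"
      using pois[of s] unfolding H_def S_def set_lebesgue_integral_def by (simp add: field_simps mult.assoc)
    thus "indicator I s * (2 * pi * m) \<le> (\<integral>t. G (s, t) \<partial>lborel)"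
      unfolding G_def by (auto simp: indicator_def)
  qed
  have ii: "(\<integral>s. indicator I s * (2 * pi * m) \<partial>lborel) = 2 * pi * (m * \<delta>)"
    unfolding I_def using x by simp
  have "2 * pi * (m * \<delta>) \<le> (\<integral>s. (\<integral>t. G (s, t) \<partial>lborel) \<partial>lborel)" using lhs unfolding ii .
  also have "\<dots> = (\<integral>t. (\<integral>s. G (s, t) \<partial>lborel) \<partial>lborel)" using F by simp
  also have "\<dots> = (\<integral>t. H t * (2 * pi) * Kf x \<delta> r t \<partial>lborel)" using rhs by simp
  also have "\<dots> = (\<integral>t. (2 * pi) * (H t * Kf x \<delta> r t) \<partial>lborel)"
    by (simp add: ac_simps)
  also have "\<dots> = 2 * pi * (\<integral>t. H t * Kf x \<delta> r t \<partial>lborel)"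
    by (rule integral_mult_right_zero)
  finally show ?thesis unfolding H_def S_def by simp
qed

lemma interval_bound:
  fixes h :: "real \<Rightarrow> complex"
  assumes hm[measurable]: "h \<in> borel_measurable lborel"
    and hi: "set_integrable lborel {0..<2*pi} h"
    and pois: "\<And>r s. 0 < r \<Longrightarrow> r < 1 \<Longrightarrow> m \<le> (LINT t:{0..<2*pi}|lborel. norm (h t) * PK r (s - t)) / (2*pi)"
    and x: "0 < x" "0 < \<delta>" "x + \<delta> < 2*pi"
  shows "m * \<delta> \<le> (LINT t:{x..x+\<delta>}|lborel. norm (h t))"
proof -
  define S where "S = {0..<2*pi::real}"
  define H where "H = (\<lambda>t. indicator S t * norm (h t))"
  have Sm[measurable]: "S \<in> sets borel" unfolding S_def by auto
  have Hm[measurable]: "H \<in> borel_measurable lborel" unfolding H_def by measurable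
  have Hi: "integrable lborel H"
    using integrable_norm[OF hi[unfolded set_integrable_def]] unfolding H_def S_def by (simp add: abs_mult)
  have Hnn: "0 \<le> H t" for t unfolding H_def by simp
  have A: "m * \<delta> \<le> (\<integral>t. H t * Kf x \<delta> (rk k) t \<partial>lborel)" for k
    unfolding H_def S_def
    by (rule step_A[OF hm hi pois]) (use rk x in auto)
  have Kfm[measurable]: "(\<lambda>t. Kf x \<delta> (rk k) t) \<in> borel_measurable lborel" for k
  proof -
    have [measurable]: "PK (rk k) \<in> borel_measurable borel" using PK_measurable rk by blast
    show ?thesis unfolding Kf_def set_lebesgue_integral_def by measurable
  qed
  have lim: "(\<lambda>k. \<integral>t. H t * Kf x \<delta> (rk k) t \<partial>lborel) \<longlonglongrightarrow> (\<integral>t. H t * indicator {x..x+\<delta>} t \<partial>lborel)"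
  proof (rule integral_dominated_convergence[where w = H])
    show "(\<lambda>t. H t * indicator {x..x+\<delta>} t) \<in> borel_measurable lborel" by measurable
    show "(\<lambda>t. H t * Kf x \<delta> (rk k) t) \<in> borel_measurable lborel" for k by measurable
    show "integrable lborel H" by (rule Hi)
    show "AE t in lborel. norm (H t * Kf x \<delta> (rk k) t) \<le> H t" for k
    proof (rule AE_I2)
      fix t
      have "0 \<le> Kf x \<delta> (rk k) t" "Kf x \<delta> (rk k) t \<le> 1"
        using Kf_nonneg[of "rk k"] Kf_le1[of "rk k" \<delta>] rk x by auto
      thus "norm (H t * Kf x \<delta> (rk k) t) \<le> H t"
        using Hnn[of t] by (simp add: abs_mult mult_left_le)
    qed
    have ae: "AE t in lborel. t \<noteq> x \<and> t \<noteq> x + \<delta>"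
      using AE_lborel_singleton[of x] AE_lborel_singleton[of "x + \<delta>"] by eventually_elim auto
    show "AE t in lborel. (\<lambda>k. H t * Kf x \<delta> (rk k) t) \<longlonglongrightarrow> H t * indicator {x..x+\<delta>} t"
      using ae
    proof eventually_elim
      fix t assume t: "t \<noteq> x \<and> t \<noteq> x + \<delta>"
      show "(\<lambda>k. H t * Kf x \<delta> (rk k) t) \<longlonglongrightarrow> H t * indicator {x..x+\<delta>} t"
      proof (cases "t \<in> S")
        case False
        hence "H t = 0" unfolding H_def by simp
        thus ?thesis by simp
      next
        case True
        show ?thesis
        proof (cases "x < t \<and> t < x + \<delta>")
          case True
          hence "(\<lambda>k. Kf x \<delta> (rk k) t) \<longlonglongrightarrow> 1" by (intro Kf_in) (use x in auto)
          hence "(\<lambda>k. H t * Kf x \<delta> (rk k) t) \<longlonglongrightarrow> H t * 1" by (intro tendsto_mult tendsto_const)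
          thus ?thesis using True by (simp add: indicator_def)
        next
          case False
          with t have o: "t < x \<or> x + \<delta> < t" by auto
          hence "(\<lambda>k. Kf x \<delta> (rk k) t) \<longlonglongrightarrow> 0"
            by (intro Kf_out) (use x \<open>t \<in> S\<close> S_def in auto)
          hence "(\<lambda>k. H t * Kf x \<delta> (rk k) t) \<longlonglongrightarrow> H t * 0" by (intro tendsto_mult tendsto_const)
          moreover have "indicator {x..x+\<delta>} t = (0::real)" using o by (auto simp: indicator_def)
          ultimately show ?thesis by simp
        qed
      qed
    qed
  qed
  have "m * \<delta> \<le> (\<integral>t. H t * indicator {x..x+\<delta>} t \<partial>lborel)"
    by (rule LIMSEQ_le_const[OF lim]) (use A in auto)
  also have "(\<integral>t. H t * indicator {x..x+\<delta>} t \<partial>lborel) = (LINT t:{x..x+\<delta>}|lborel. norm (h t))"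
    unfolding set_lebesgue_integral_def H_def S_def
    by (intro Bochner_Integration.integral_cong refl) (use x in \<open>auto simp: indicator_def\<close>)
  finally show ?thesis .
qed

lemma poisson:
  fixes h :: "real \<Rightarrow> complex"
  assumes hm[measurable]: "h \<in> borel_measurable lborel"
    and hi: "set_integrable lborel {0..<2*pi} h"
    and neg: "\<And>n. n \<ge> 1 \<Longrightarrow> (LINT t:{0..<2*pi}|lborel. h t * cis (real n * t)) = 0"
    and r: "0 \<le> r" "r < 1"
  shows "(\<lambda>n. (LINT t:{0..<2*pi}|lborel. h t * cis (- (real n * t))) / (2*pi) * (complex_of_real r * cis s)^n)
           sums ((LINT t:{0..<2*pi}|lborel. h t * complex_of_real (PK r (s - t))) / (2*pi))"
proof -
  define S where "S = {0..<2*pi}"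
  define F where "F = (\<lambda>n t. indicator S t *\<^sub>R (h t * uterm r (s - t) n))"
  have Sm[measurable]: "S \<in> sets borel" unfolding S_def by simp
  have hi': "integrable lborel (\<lambda>t. indicator S t *\<^sub>R h t)" using hi unfolding S_def set_integrable_def .
  have Fm[measurable]: "F n \<in> borel_measurable lborel" for n
    unfolding F_def uterm_def S_def by measurable
  have Fb: "norm (F n t) \<le> 2 * r^n * norm (indicator S t *\<^sub>R h t)" for n t
    unfolding F_def using uterm_norm[OF r(1), of "s - t" n] r
    by (auto simp: indicator_def norm_mult mult_left_mono mult.commute)
  have Fi: "integrable lborel (F n)" for n
    by (rule Bochner_Integration.integrable_bound[OF integrable_mult_left[OF integrable_norm[OF hi'], of "2 * r^n"]])
       (use Fb r in \<open>auto simp: abs_mult mult.commute mult.left_commute\<close>)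
  have sm: "summable (\<lambda>i. norm (F i x))" for x
  proof (rule summable_comparison_test)
    show "\<exists>N. \<forall>n\<ge>N. norm (norm (F n x)) \<le> 2 * r^n * norm (indicator S x *\<^sub>R h x)"
      using Fb by auto
    show "summable (\<lambda>n. 2 * r^n * norm (indicator S x *\<^sub>R h x))"
      using r by (intro summable_mult2 summable_mult summable_geometric) auto
  qed
  have si: "summable (\<lambda>i. \<integral>x. norm (F i x) \<partial>lborel)"
  proof (rule summable_comparison_test)
    show "\<exists>N. \<forall>n\<ge>N. norm (\<integral>x. norm (F n x) \<partial>lborel) \<le> 2 * r^n * (\<integral>x. norm (indicator S x *\<^sub>R h x) \<partial>lborel)"
    proof (intro exI allI impI)
      fix n
      have "(\<integral>x. norm (F n x) \<partial>lborel) \<le> (\<integral>x. 2 * r^n * norm (indicator S x *\<^sub>R h x) \<partial>lborel)"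
        using Fi Fb integrable_mult_left[OF integrable_norm[OF hi'], of "2*r^n"]
        by (intro integral_mono) auto
      thus "norm (\<integral>x. norm (F n x) \<partial>lborel) \<le> 2 * r^n * (\<integral>x. norm (indicator S x *\<^sub>R h x) \<partial>lborel)"
        by (simp add: integral_nonneg_AE)
    qed
    show "summable (\<lambda>n. 2 * r^n * (\<integral>x. norm (indicator S x *\<^sub>R h x) \<partial>lborel))"
      using r by (intro summable_mult2 summable_mult summable_geometric) auto
  qed
  have ps: "(\<lambda>n. F n t) sums (indicator S t *\<^sub>R (h t * complex_of_real (PK r (s - t))))" for t
    unfolding F_def by (intro sums_scaleR_right sums_mult uterm_sums r)
  have S1: "(\<lambda>n. integral\<^sup>L lborel (F n)) sums (\<integral>t. (\<Sum>n. F n t) \<partial>lborel)"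
    by (rule sums_integral[OF Fi]) (use sm si in auto)
  have S2: "(\<integral>t. (\<Sum>n. F n t) \<partial>lborel) = (LINT t:S|lborel. h t * complex_of_real (PK r (s - t)))"
    unfolding set_lebesgue_integral_def using ps by (metis sums_unique)
  have trm: "integral\<^sup>L lborel (F n) / (2*pi) = (LINT t:S|lborel. h t * cis (- (real n * t))) / (2*pi) * (complex_of_real r * cis s)^n" for n
  proof -
    have i1: "set_integrable lborel S (\<lambda>t. h t * cis (- (real n * t)))"
      unfolding set_integrable_def
      apply (rule Bochner_Integration.integrable_bound[OF integrable_norm[OF hi']])
      apply measurable
      by (auto simp: norm_mult indicator_def)
    have i2: "set_integrable lborel S (\<lambda>t. h t * cis (real n * t))"
      unfolding set_integrable_def
      apply (rule Bochner_Integration.integrable_bound[OF integrable_norm[OF hi']])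
      apply measurable
      by (auto simp: norm_mult indicator_def)
    have e1: "h t * cis (real n * (s - t)) = cis (real n * s) * (h t * cis (- (real n * t)))" for t
      by (simp add: cis_mult algebra_simps)
    have e2: "h t * cis (- (real n * (s - t))) = cis (- (real n * s)) * (h t * cis (real n * t))" for t
      by (simp add: cis_mult algebra_simps)
    have "integral\<^sup>L lborel (F n) = (LINT t:S|lborel. complex_of_real (r^n) * (h t * cis (real n * (s - t)))
         + (if n = 0 then 0 else complex_of_real (r^n) * (h t * cis (- (real n * (s - t))))))"
      unfolding F_def set_lebesgue_integral_def uterm_def
      by (intro Bochner_Integration.integral_cong refl) (simp add: algebra_simps)
    also have "\<dots> = complex_of_real (r^n) * cis (real n * s) * (LINT t:S|lborel. h t * cis (- (real n * t)))
         + (if n = 0 then 0 else complex_of_real (r^n) * cis (- (real n * s)) * (LINT t:S|lborel. h t * cis (real n * t)))"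
      unfolding e1 e2 using i1 i2
      by (simp add: set_integral_add set_integral_mult_right set_integrable_mult_right mult.assoc)
    also have "\<dots> = complex_of_real (r^n) * cis (real n * s) * (LINT t:S|lborel. h t * cis (- (real n * t)))"
      using neg[of n] unfolding S_def by simp
    finally show ?thesis by (simp add: power_mult_distrib Complex.DeMoivre)
  qed
  from sums_divide[OF S1, of "2*pi"] S2 trm show ?thesis unfolding S_def by simp
qed

lemma T_meas_sets[simp, measurable_cong]: "sets T_meas = sets borel"
  unfolding T_meas_def by simp

lemma T_meas_space[simp]: "space T_meas = UNIV"
  unfolding T_meas_def by simp

lemma cis_meas[measurable]: "cis \<in> measurable (restrict_space lborel {0..<2*pi}) borel"
proof -
  have "cis \<in> borel_measurable borel"
    by (rule borel_measurable_continuous_onI) (intro continuous_intros)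
  hence "cis \<in> borel_measurable lborel" by simp
  thus ?thesis by (rule measurable_restrict_space1)
qed

lemma T_int:
  fixes f :: "complex \<Rightarrow> 'b::{banach, second_countable_topology}"
  assumes "f \<in> borel_measurable borel"
  shows "integral\<^sup>L T_meas f = (LINT t:{0..<2*pi}|lborel. f (cis t))"
  unfolding T_meas_def set_lebesgue_integral_def
  by (subst integral_distr[OF cis_meas assms], subst integral_restrict_space) auto

lemma T_integrable:
  fixes f :: "complex \<Rightarrow> 'b::{banach, second_countable_topology}"
  assumes "f \<in> borel_measurable borel"
  shows "integrable T_meas f \<longleftrightarrow> set_integrable lborel {0..<2*pi} (\<lambda>t. f (cis t))"
  unfolding T_meas_def set_integrable_def
  by (subst integrable_distr_eq[OF cis_meas assms], subst integrable_restrict_space) auto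

lemma T_AE:
  assumes "{z. P z} \<in> sets borel"
  shows "(AE z in T_meas. P z) \<longleftrightarrow> (AE t in lborel. t \<in> {0..<2*pi} \<longrightarrow> P (cis t))"
  unfolding T_meas_def
  by (subst AE_distr_iff[OF cis_meas]) (use assms in \<open>auto simp: AE_restrict_space_iff\<close>)

lemma powi_meas[measurable]: "(\<lambda>z::complex. z powi k) \<in> borel_measurable borel"
  by (cases "k \<ge> 0") (simp_all add: power_int_def)

lemma ae_lower:
  fixes h :: "real \<Rightarrow> complex"
  assumes hm[measurable]: "h \<in> borel_measurable lborel"
    and hi: "set_integrable lborel {0..<2*pi} h"
    and ib: "\<And>x \<delta>. 0 < x \<Longrightarrow> 0 < \<delta> \<Longrightarrow> x + \<delta> < 2*pi \<Longrightarrow> m * \<delta> \<le> (LINT t:{x..x+\<delta>}|lborel. norm (h t))"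
  shows "AE t in lborel. t \<in> {0<..<2*pi} \<longrightarrow> m \<le> norm (h t)"
proof -
  define f where "f = (\<lambda>t. indicator {0..<2*pi} t * norm (h t))"
  have fm[measurable]: "f \<in> borel_measurable lborel" unfolding f_def by measurable
  have fi: "integrable lborel f"
    using integrable_norm[OF hi[unfolded set_integrable_def]] unfolding f_def by (simp add: abs_mult)
  have fio: "f integrable_on cbox a b" for a b :: real
    using integrable_on_subcbox[OF integrable_on_lborel[OF fi], of a b] by simp
  obtain N where N: "negligible N"
    "\<And>x e. \<lbrakk>x \<notin> N; 0 < e\<rbrakk> \<Longrightarrow> \<exists>d>0. \<forall>h. 0 < h \<and> h < d \<longrightarrow>
         norm (integral (cbox x (x + h *\<^sub>R One)) f /\<^sub>R h ^ DIM(real) - f x) < e"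
    using integrable_ccontinuous_explicit[of f] fio by blast
  have sub: "{t \<in> space lebesgue. \<not> (t \<in> {0<..<2*pi} \<longrightarrow> m \<le> norm (h t))} \<subseteq> N"
  proof (rule subsetI)
    fix t assume tin: "t \<in> {t \<in> space lebesgue. \<not> (t \<in> {0<..<2*pi} \<longrightarrow> m \<le> norm (h t))}"
    hence t: "t \<in> {0<..<2*pi}" and lt: "\<not> m \<le> norm (h t)" by auto
    show "t \<in> N"
    proof (rule ccontr)
      assume "t \<notin> N"
      have ft: "f t = norm (h t)" using t unfolding f_def by simp
      obtain d where d: "d > 0" "\<And>h'. 0 < h' \<and> h' < d \<Longrightarrow>
         norm (integral (cbox t (t + h' *\<^sub>R One)) f /\<^sub>R h' ^ DIM(real) - f t) < m - norm (h t)"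
        using N(2)[OF \<open>t \<notin> N\<close>, of "m - norm (h t)"] lt by force
      define h' where "h' = min (d/2) ((2*pi - t)/2)"
      have h1: "h' \<le> (2*pi - t)/2" "h' \<le> d/2" unfolding h'_def by (rule min.cobounded2, rule min.cobounded1)
      have h0: "0 < h'" using d t unfolding h'_def by auto
      have tt: "0 < t" "t < 2*pi" using t by auto
      have h'3: "t + h' < 2*pi" using tt(2) h1(1) by (simp add: field_simps)
      have h'2: "h' < d" using d(1) h1(2) by linarith
      note h' = h0 h'2 h'3
      have "set_integrable lborel {t..t+h'} f"
        unfolding set_integrable_def by (rule integrable_mult_indicator) (use fi in auto)
      hence eqi: "integral {t..t+h'} f = (LINT s:{t..t+h'}|lborel. f s)"
        by (simp add: set_borel_integral_eq_integral)
      also have "\<dots> = (LINT s:{t..t+h'}|lborel. norm (h s))"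
        unfolding set_lebesgue_integral_def f_def
        by (intro Bochner_Integration.integral_cong refl) (use t h' in \<open>auto simp: indicator_def\<close>)
      finally have "m * h' \<le> integral {t..t+h'} f"
        using ib[of t h'] t h' by simp
      hence "m \<le> integral {t..t+h'} f / h'" using h' by (simp add: field_simps)
      moreover have "norm (integral {t..t+h'} f / h' - f t) < m - norm (h t)"
        using d(2)[of h'] h' by (simp add: divide_inverse mult.commute)
      ultimately show False using ft by simp
    qed
  qed
  have "AE t in lebesgue. t \<in> {0<..<2*pi} \<longrightarrow> m \<le> norm (h t)"
    by (rule AE_I'[OF _ sub]) (use N(1) negligible_iff_null_sets in blast)
  thus ?thesis by (simp add: AE_completion_iff)
qed

theorem lemma7p3:
  fixes \<epsilon> :: real and a b :: "complex \<Rightarrow> complex"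
  assumes "0 < \<epsilon>" and "\<epsilon> < 1 - 2 powr (-1/2)"
    and "class_B_eps \<epsilon> a b"
  shows "esssup T_meas (\<lambda>z. ereal (cmod (b z) / cmod (a z)))
           \<le> ereal (1 - (3 powr (3/2) / 2) * \<epsilon>)"
proof -
  define S where "S = {0..<2*pi::real}"
  define m0 where "m0 = 2 powr (-1/2) + \<epsilon>"
  have m0pos: "0 < m0" unfolding m0_def using assms(1) by (simp add: add_pos_pos)
  from assms(3) have cL: "class_L a b" and cinf: "m0 \<le> inf_abs_Dstar a"
    unfolding class_B_eps_def class_B_def m0_def by auto
  have bmeq: "borel_measurable T_meas = borel_measurable borel"
    by (rule measurable_cong_sets) auto
  have am[measurable]: "a \<in> borel_measurable borel" and bm[measurable]: "b \<in> borel_measurable borel"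
    and AEeq: "AE z in T_meas. a z * star a z + b z * star b z = 1"
    and H2: "H2_Dstar a"
    using cL unfolding class_L_def bmeq by auto
  define g where "g = star a"
  have L2: "L2_T g" and negc: "\<And>n::int. n < 0 \<Longrightarrow> fourier_coeff g n = 0"
    using H2 unfolding H2_Dstar_def H2_D_def g_def by auto
  have gm[measurable]: "g \<in> borel_measurable borel" and g2: "integrable T_meas (\<lambda>z. (cmod (g z))^2)"
    using L2 unfolding L2_T_def bmeq by auto
  define h where "h = (\<lambda>t. g (cis t))"
  have hm[measurable]: "h \<in> borel_measurable lborel" unfolding h_def by measurable
  have Sm[measurable]: "S \<in> sets borel" unfolding S_def by simp
  have g2m: "(\<lambda>z. (cmod (g z))^2) \<in> borel_measurable borel" by measurable
  have hsq: "integrable lborel (\<lambda>t. indicator S t * (cmod (h t))^2)"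
    using g2 unfolding T_integrable[of "\<lambda>z. (cmod (g z))^2", OF g2m]
    unfolding set_integrable_def h_def S_def by simp
  have Si: "integrable lborel (indicator S :: real \<Rightarrow> real)"
    unfolding S_def by (rule integrable_real_indicator) (auto simp: emeasure_lborel_Ico)
  have hi: "set_integrable lborel S h"
    unfolding set_integrable_def
  proof (rule Bochner_Integration.integrable_bound[OF Bochner_Integration.integrable_add[OF Si hsq]])
    show "(\<lambda>t. indicator S t *\<^sub>R h t) \<in> borel_measurable lborel" by measurable
    show "AE t in lborel. norm (indicator S t *\<^sub>R h t) \<le> norm (indicator S t + indicator S t * (cmod (h t))^2)"
    proof (rule AE_I2)
      fix t
      have "cmod (h t) \<le> 1 + (cmod (h t))^2"
      proof -
        have "0 \<le> (cmod (h t) - 1/2)^2 + 3/4" by (simp add: add_nonneg_nonneg)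
        thus ?thesis by (simp add: power2_eq_square algebra_simps)
      qed
      thus "norm (indicator S t *\<^sub>R h t) \<le> norm (indicator S t + indicator S t * (cmod (h t))^2)"
        by (auto simp: indicator_def)
    qed
  qed
  have coeff: "fourier_coeff g k = (LINT t:S|lborel. h t * cis (of_int (- k) * t)) / (2*pi)" for k
    unfolding fourier_coeff_def S_def h_def
    by (subst T_int) (auto simp: cis_power_int)
  have neg: "(LINT t:S|lborel. h t * cis (real n * t)) = 0" if "n \<ge> 1" for n :: nat
    using negc[of "- int n"] that unfolding coeff by simp
  have ext: "H2_D_ext g (complex_of_real r * cis s) = (LINT t:S|lborel. h t * complex_of_real (PK r (s - t))) / (2*pi)"
    if r: "0 \<le> r" "r < 1" for r s
  proof -
    have "(\<lambda>n. (LINT t:S|lborel. h t * cis (- (real n * t))) / (2*pi) * (complex_of_real r * cis s)^n)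
           sums ((LINT t:S|lborel. h t * complex_of_real (PK r (s - t))) / (2*pi))"
      unfolding S_def by (rule poisson[OF hm hi[unfolded S_def] neg[unfolded S_def] r]) 
    moreover have "fourier_coeff g (int n) = (LINT t:S|lborel. h t * cis (- (real n * t))) / (2*pi)" for n
      unfolding coeff by simp
    ultimately show ?thesis unfolding H2_D_ext_def by (simp add: sums_iff)
  qed
  have pois: "m0 \<le> (LINT t:{0..<2*pi}|lborel. norm (h t) * PK r (s - t)) / (2*pi)"
    if r: "0 < r" "r < 1" for r s
  proof -
    define w where "w = complex_of_real r * cis s"
    have nw: "norm w = r" unfolding w_def using r by (simp add: norm_mult)
    define z where "z = 1 / cnj w"
    have nz: "1 < cmod z" unfolding z_def using nw r by (simp add: norm_divide)
    have zw: "1 / cnj z = w" unfolding z_def by simp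
    have "cmod (H2_Dstar_ext a z) = cmod (H2_D_ext g w)"
      unfolding H2_Dstar_ext_def zw g_def by simp
    have ex: "\<exists>z'. cmod (H2_D_ext g w) = cmod (H2_Dstar_ext a z') \<and> 1 < cmod z'"
      using nz \<open>cmod (H2_Dstar_ext a z) = cmod (H2_D_ext g w)\<close> by metis
    have mem: "cmod (H2_D_ext g w) \<in> insert (cmod (H2_Dstar_inf a)) {cmod (H2_Dstar_ext a z) | z. 1 < cmod z}"
      by (rule insertI2) (use ex in simp)
    have "inf_abs_Dstar a \<le> cmod (H2_D_ext g w)"
      unfolding inf_abs_Dstar_def
      by (rule cInf_lower[OF mem]) (rule bdd_belowI[of _ 0], auto)
    also have "\<dots> = cmod (LINT t:S|lborel. h t * complex_of_real (PK r (s - t))) / (2*pi)"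
      unfolding w_def using ext[of r s] r by (simp add: norm_divide)
    also have "\<dots> \<le> (LINT t:S|lborel. norm (h t) * PK r (s - t)) / (2*pi)"
    proof (rule divide_right_mono)
      have "cmod (LINT t:S|lborel. h t * complex_of_real (PK r (s - t))) \<le> (\<integral>t. norm (indicator S t *\<^sub>R (h t * complex_of_real (PK r (s - t)))) \<partial>lborel)"
        unfolding set_lebesgue_integral_def by (rule integral_norm_bound)
      also have "\<dots> = (LINT t:S|lborel. norm (h t) * PK r (s - t))"
        unfolding set_lebesgue_integral_def using PK_nonneg[of r] r
        by (intro Bochner_Integration.integral_cong refl) (auto simp: norm_mult indicator_def)
      finally show "cmod (LINT t:S|lborel. h t * complex_of_real (PK r (s - t))) \<le> (LINT t:S|lborel. norm (h t) * PK r (s - t))" .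
    qed simp
    finally show ?thesis using cinf unfolding S_def by simp
  qed
  have ib: "m0 * \<delta> \<le> (LINT t:{x..x+\<delta>}|lborel. norm (h t))"
    if "0 < x" "0 < \<delta>" "x + \<delta> < 2*pi" for x \<delta>
    by (rule interval_bound[OF hm hi[unfolded S_def] pois that])
  have ae1: "AE t in lborel. t \<in> {0<..<2*pi} \<longrightarrow> m0 \<le> norm (h t)"
    by (rule ae_lower[OF hm hi[unfolded S_def] ib])
  have ae2: "AE t in lborel. t \<in> {0..<2*pi} \<longrightarrow> m0 \<le> cmod (g (cis t))"
    using ae1 AE_lborel_singleton[of 0]
    by eventually_elim (auto simp: h_def)
  have aeg: "AE z in T_meas. m0 \<le> cmod (g z)"
    by (subst T_AE) (use ae2 in auto)
  have aeT: "AE z in T_meas. cmod z = 1"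
    by (subst T_AE) auto
  have star_T: "star f z = cnj (f z)" if "cmod z = 1" for f z
  proof -
    have "z * cnj z = 1" using complex_norm_square[of z] that by simp
    have nz0: "cnj z \<noteq> 0" using that by auto
    have "1 / cnj z = (z * cnj z) / cnj z" using \<open>z * cnj z = 1\<close> by simp
    also have "\<dots> = z" using nz0 by simp
    finally have "1 / cnj z = z" .
    thus ?thesis unfolding star_def by simp
  qed
  have aefin: "AE z in T_meas. cmod (b z) / cmod (a z) \<le> 1 - (3 powr (3/2) / 2) * \<epsilon>"
    using aeg aeT AEeq
  proof eventually_elim
    fix z assume z: "m0 \<le> cmod (g z)" "cmod z = 1" "a z * star a z + b z * star b z = 1"
    have ga: "cmod (g z) = cmod (a z)" unfolding g_def star_T[OF z(2)] by simp
    have "a z * cnj (a z) + b z * cnj (b z) = 1" using z(3) unfolding star_T[OF z(2)] .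
    moreover have "complex_of_real ((cmod (a z))^2 + (cmod (b z))^2) = a z * cnj (a z) + b z * cnj (b z)"
      unfolding of_real_add complex_norm_square ..
    ultimately have "complex_of_real ((cmod (a z))^2 + (cmod (b z))^2) = 1" by simp
    hence eq: "(cmod (a z))^2 + (cmod (b z))^2 = 1"
      by (metis of_real_1 of_real_eq_iff)
    show "cmod (b z) / cmod (a z) \<le> 1 - (3 powr (3/2) / 2) * \<epsilon>"
      by (rule ratio_bound[OF assms(1) _ _ eq assms(2)]) (use z(1) ga in \<open>auto simp: m0_def\<close>)
  qed
  show ?thesis
    by (rule esssup_I) (use aefin in auto)
qed

end
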